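(* Let $x\in\mathbb X$, $\alpha>0$ and $x_\alpha\in R_\alpha(Ax)$. Then $$\gamma_x\Big(\tfrac1\alpha\|Ax-Ax_\alpha\|_{\mathbb Y}\Big)\le\|Ax-Ax_\alpha\|_{\mathbb Y}\le4\gamma_x\Big(\tfrac1{4\alpha}\|Ax-Ax_\alpha\|_{\mathbb Y}\Big).$$
   Context: Standing setting: $\mathbb X$ real Banach space, $\tau$ a topology with $(\mathbb X,\tau)$ locally convex Hausdorff; $\mathcal R:\mathbb X\to(-\infty,\infty]$ proper convex with $\tau$-compact sublevel sets; $\mathbb Y$ real Hilbert space; $A:\mathbb X\to\mathbb Y$ linear, $\tau$-to-weak continuous. $R_\alpha(g):=\operatorname{argmin}_{x\in\mathrm{dom}(\mathcal R)}(\frac1{2\alpha}\|g-Ax\|_{\mathbb Y}^2+\mathcal R(x))$, $\varrho_1(z):=\sup\{\beta^{-1}\|Az-Az_\beta\|_{\mathbb Y}:\beta>0,z_\beta\in R_\beta(Az)\}$. For $r\ge0$ let $B_r:=\{z\in\mathbb X:\varrho_1(z)\le r\}$ (nonempty, since it contains the minimizers of $\mathcal R$) and $\gamma_x(r):=\inf_{z\in B_r}\|Ax-Az\|_{\mathbb Y}$. *)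

theory Defs
  imports "HOL-Analysis.Analysis" "HOL-Library.Extended_Real"
begin

definition locally_convex_hausdorff :: "'a::real_vector topology \<Rightarrow> bool" where
  "locally_convex_hausdorff T \<longleftrightarrow>
     topspace T = UNIV \<and> Hausdorff_space T \<and>
     continuous_map (prod_topology T T) T (\<lambda>(x, y). x + y) \<and>
     continuous_map (prod_topology euclideanreal T) T (\<lambda>(c, x). c *\<^sub>R x) \<and>
     (\<forall>U x. openin T U \<and> x \<in> U \<longrightarrow> (\<exists>V. openin T V \<and> convex V \<and> x \<in> V \<and> V \<subseteq> U))"

definition weak_topology :: "'b::real_inner topology" where
  "weak_topology = topology_generated_by {{y. inner y z \<in> U} | z U. open U}"

definition edom :: "('a \<Rightarrow> ereal) \<Rightarrow> 'a set" where
  "edom R = {x. R x \<noteq> \<infinity>}"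

definition proper_convex :: "('a::real_vector \<Rightarrow> ereal) \<Rightarrow> bool" where
  "proper_convex R \<longleftrightarrow> (\<forall>x. R x \<noteq> -\<infinity>) \<and> edom R \<noteq> {} \<and>
     (\<forall>x\<in>edom R. \<forall>y\<in>edom R. \<forall>u::real. 0 < u \<and> u < 1 \<longrightarrow>
        R (u *\<^sub>R x + (1 - u) *\<^sub>R y) \<le> ereal u * R x + ereal (1 - u) * R y)"

definition tikh :: "('a \<Rightarrow> ereal) \<Rightarrow> ('a \<Rightarrow> 'b::real_normed_vector) \<Rightarrow> real \<Rightarrow> 'b \<Rightarrow> 'a set" where
  "tikh R A \<alpha> g = {x \<in> edom R. \<forall>y \<in> edom R.
      ereal (1 / (2 * \<alpha>) * (norm (g - A x))\<^sup>2) + R x \<le> ereal (1 / (2 * \<alpha>) * (norm (g - A y))\<^sup>2) + R y}"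

definition rho1 :: "('a \<Rightarrow> ereal) \<Rightarrow> ('a \<Rightarrow> 'b::real_normed_vector) \<Rightarrow> 'a \<Rightarrow> ereal" where
  "rho1 R A z = Sup {ereal (norm (A z - A zb) / \<beta>) | \<beta> zb. \<beta> > 0 \<and> zb \<in> tikh R A \<beta> (A z)}"

definition Bset :: "('a \<Rightarrow> ereal) \<Rightarrow> ('a \<Rightarrow> 'b::real_normed_vector) \<Rightarrow> real \<Rightarrow> 'a set" where
  "Bset R A r = {z. rho1 R A z \<le> ereal r}"

definition gamma :: "('a \<Rightarrow> ereal) \<Rightarrow> ('a \<Rightarrow> 'b::real_normed_vector) \<Rightarrow> 'a \<Rightarrow> real \<Rightarrow> real" where
  "gamma R A x r = Inf {norm (A x - A z) | z. z \<in> Bset R A r}"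

end

theory Submission
  imports Defs
begin


lemma exist_min:
  fixes \<tau> :: "'a::real_vector topology" and R :: "'a \<Rightarrow> ereal" and h :: "'a \<Rightarrow> real"
  assumes H: "Hausdorff_space \<tau>" and top: "topspace \<tau> = UNIV"
    and pc: "proper_convex R"
    and comp: "\<And>c. compactin \<tau> {z. R z \<le> ereal c}"
    and hpos: "\<And>y. h y \<ge> 0"
    and hlsc: "\<And>y q. q < h y \<Longrightarrow> \<exists>U. openin \<tau> U \<and> y \<in> U \<and> (\<forall>y'\<in>U. q < h y')"
  shows "\<exists>z\<in>edom R. \<forall>y. ereal (h z) + R z \<le> ereal (h y) + R y"
proof -
  define J where "J y = ereal (h y) + R y" for y
  have Rninf: "R y \<noteq> -\<infinity>" for y using pc unfolding proper_convex_def by auto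
  obtain x0 where x0: "x0 \<in> edom R" using pc unfolding proper_convex_def by auto
  define c0 where "c0 = h x0 + real_of_ereal (R x0)"
  have Jx0: "J x0 = ereal c0" using x0 Rninf[of x0] unfolding J_def c0_def edom_def
    by (cases "R x0") auto
  have Jge: "R y \<le> J y" for y using hpos[of y] Rninf[of y] unfolding J_def
    by (cases "R y") auto
  have Rcl: "openin \<tau> {z. \<not> R z \<le> ereal c}" for c
  proof -
    have "closedin \<tau> {z. R z \<le> ereal c}" using compactin_imp_closedin[OF H comp] .
    then have "openin \<tau> (UNIV - {z. R z \<le> ereal c})" unfolding closedin_def top by simp
    moreover have "UNIV - {z. R z \<le> ereal c} = {z. \<not> R z \<le> ereal c}" by auto
    ultimately show ?thesis by simp
  qed
  have Jcl: "closedin \<tau> {y. J y \<le> ereal c}" for c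
  proof -
    have "openin \<tau> {y. \<not> J y \<le> ereal c}"
    proof (subst openin_subopen, intro ballI)
      fix y assume "y \<in> {y. \<not> J y \<le> ereal c}"
      then have yc: "\<not> J y \<le> ereal c" by simp
      obtain q where q1: "q < h y" and q2: "ereal (c - q) < R y"
      proof (cases "R y")
        case (real r)
        have "h y + r > c" using yc real unfolding J_def by simp
        moreover have "(c - r + h y)/2 < h y" "c - (c - r + h y) / 2 < r" using calculation by (simp_all add: field_simps)
        ultimately show ?thesis using that[of "(c - r + h y)/2"] real by simp
      next
        case PInf then show ?thesis using that[of "h y - 1"] by simp
      next
        case MInf then show ?thesis using Rninf by simp
      qed
      obtain U1 where U1: "openin \<tau> U1" "y \<in> U1" "\<forall>y'\<in>U1. q < h y'" using hlsc[OF q1] by blast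
      define V where "V = U1 \<inter> {z. \<not> R z \<le> ereal (c - q)}"
      have "openin \<tau> V" unfolding V_def using U1(1) Rcl by (rule openin_Int)
      moreover have "y \<in> V" using U1(2) q2 unfolding V_def by simp
      moreover have "V \<subseteq> {y. \<not> J y \<le> ereal c}"
      proof
        fix y' assume "y' \<in> V"
        then have a: "q < h y'" and b: "ereal (c - q) < R y'" using U1(3) unfolding V_def by auto
        show "y' \<in> {y. \<not> J y \<le> ereal c}"
          using a b unfolding J_def by (cases "R y'") auto
      qed
      ultimately show "\<exists>T. openin \<tau> T \<and> y \<in> T \<and> T \<subseteq> {y. \<not> J y \<le> ereal c}" by blast
    qed
    moreover have "UNIV - {y. J y \<le> ereal c} = {y. \<not> J y \<le> ereal c}" by auto
    ultimately show ?thesis unfolding closedin_def top by simp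
  qed
  define K where "K = {z. R z \<le> ereal c0}"
  define S where "S c = {y. J y \<le> ereal c}" for c
  define CC where "CC = {c. c \<le> c0 \<and> (\<exists>y. J y \<le> ereal c)}"
  define UU where "UU = S ` CC"
  have "K \<inter> \<Inter>UU \<noteq> {}"
  proof -
    have cK: "compactin \<tau> K" unfolding K_def by (rule comp)
    have "\<forall>C\<in>UU. closedin \<tau> C" unfolding UU_def S_def using Jcl by auto
    moreover have "\<forall>F. finite F \<and> F \<subseteq> UU \<longrightarrow> K \<inter> \<Inter>F \<noteq> {}"
    proof (intro allI impI)
      fix F assume F: "finite F \<and> F \<subseteq> UU"
      show "K \<inter> \<Inter>F \<noteq> {}"
      proof (cases "F = {}")
        case True
        have "x0 \<in> K" unfolding K_def using Jge[of x0] Jx0 by simp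
        then show ?thesis using True by auto
      next
        case False
        obtain C where C: "C \<subseteq> CC" "finite C" "F = S ` C"
          using finite_subset_image[of F S CC] F unfolding UU_def by blast
        have Cne: "C \<noteq> {}" using False C by auto
        define m where "m = Min C"
        have "m \<in> C" unfolding m_def using C Cne by simp
        then obtain y where y: "J y \<le> ereal m" "m \<le> c0" using C unfolding CC_def by auto
        have "y \<in> K" unfolding K_def using Jge[of y] y by (simp add: order.trans[OF Jge[of y]] order.trans[OF y(1)])
        moreover have "y \<in> \<Inter>F"
        proof -
          have "\<forall>c\<in>C. m \<le> c" unfolding m_def using C by simp
          then have "\<forall>c\<in>C. y \<in> S c" using y unfolding S_def by (auto intro: order.trans)
          then show ?thesis using C by auto
        qed
        ultimately show ?thesis by auto
      qed
    qed
    ultimately show ?thesis using cK unfolding compactin_fip by blast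
  qed
  then obtain z where zK: "z \<in> K" and zU: "z \<in> \<Inter>UU" by blast
  have c0CC: "c0 \<in> CC" unfolding CC_def using Jx0 by (intro CollectI conjI exI[of _ x0]) simp_all
  have Jz0: "J z \<le> ereal c0" using zU c0CC unfolding UU_def S_def by auto
  have "z \<in> edom R" using zK unfolding K_def edom_def by auto
  moreover have "J z \<le> J y" for y
  proof (cases "J y")
    case (real c)
    show ?thesis
    proof (cases "c \<le> c0")
      case True
      then have "c \<in> CC" unfolding CC_def using real by (intro CollectI conjI exI[of _ y]) simp_all
      then show ?thesis using zU real unfolding UU_def S_def by auto
    next
      case False
      then have cc: "ereal c0 \<le> ereal c" by simp
      show ?thesis using order.trans[OF Jz0 cc] real by simp
    qed
  next
    case PInf then show ?thesis by simp
  next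
    case MInf then show ?thesis using Rninf[of y] unfolding J_def by simp
  qed
  ultimately show ?thesis unfolding J_def by (intro bexI[of _ z]) auto
qed



lemma lim_aux:
  fixes a b d :: real
  assumes b: "b \<ge> 0" and h: "\<And>t. 0 < t \<Longrightarrow> t < 1 \<Longrightarrow> a - t * b \<le> d"
  shows "a \<le> d"
proof (rule ccontr)
  assume "\<not> a \<le> d"
  then have pos: "a - d > 0" by simp
  define t where "t = min (1/2) ((a - d) / (2 * (b + 1)))"
  have t0: "0 < t" "t < 1" unfolding t_def using pos b by auto
  have "t * b \<le> (a - d) / (2 * (b + 1)) * b" unfolding t_def using b by (intro mult_right_mono) auto
  also have "\<dots> \<le> (a - d) / 2"
    using pos b by (simp add: field_simps)
  finally have "t * b < a - d" using pos by simp
  then show False using h[OF t0] by simp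
qed

lemma VI:
  fixes R :: "'a::real_vector \<Rightarrow> ereal" and A :: "'a \<Rightarrow> 'b::real_inner"
  assumes pc: "proper_convex R" and lin: "linear A" and al: "\<alpha> > 0"
    and xa: "xa \<in> tikh R A \<alpha> g" and y: "y \<in> edom R"
  shows "inner (g - A xa) (A y - A xa) / \<alpha> \<le> real_of_ereal (R y) - real_of_ereal (R xa)"
proof -
  have Rninf: "R z \<noteq> -\<infinity>" for z using pc unfolding proper_convex_def by auto
  have xad: "xa \<in> edom R" using xa unfolding tikh_def by auto
  obtain rx where rx: "R xa = ereal rx" using xad Rninf[of xa] unfolding edom_def by (cases "R xa") auto
  obtain ry where ry: "R y = ereal ry" using y Rninf[of y] unfolding edom_def by (cases "R y") auto
  define e where "e = g - A xa"
  define v where "v = A y - A xa"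
  define c where "c = 1 / (2 * \<alpha>)"
  have c0: "c > 0" unfolding c_def using al by simp
  have key: "inner e v / \<alpha> - t * ((norm v)\<^sup>2 / (2 * \<alpha>)) \<le> ry - rx" if t: "0 < t" "t < 1" for t
  proof -
    define yt where "yt = t *\<^sub>R y + (1 - t) *\<^sub>R xa"
    have "R yt \<le> ereal t * R y + ereal (1 - t) * R xa"
      using pc y xad t unfolding proper_convex_def yt_def by blast
    then have conv: "R yt \<le> ereal (t * ry + (1 - t) * rx)" using rx ry by simp
    then have ytd: "yt \<in> edom R" unfolding edom_def by auto
    have "ereal (c * (norm (g - A xa))\<^sup>2) + R xa \<le> ereal (c * (norm (g - A yt))\<^sup>2) + R yt"
      using xa ytd unfolding tikh_def c_def by blast
    also have "\<dots> \<le> ereal (c * (norm (g - A yt))\<^sup>2) + ereal (t * ry + (1 - t) * rx)"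
      using conv by (rule add_left_mono)
    finally have i1: "c * (norm e)\<^sup>2 + rx \<le> c * (norm (g - A yt))\<^sup>2 + (t * ry + (1 - t) * rx)"
      using rx unfolding e_def by simp
    have "A yt = t *\<^sub>R A y + (1 - t) *\<^sub>R A xa"
      unfolding yt_def by (simp only: linear_add[OF lin] linear_scale[OF lin])
    then have "A yt = A xa + t *\<^sub>R v"
      unfolding v_def by (simp add: algebra_simps)
    then have "g - A yt = e - t *\<^sub>R v" unfolding e_def by (simp add: algebra_simps)
    moreover have "(norm (e - t *\<^sub>R v))\<^sup>2 = (norm e)\<^sup>2 - 2 * t * inner e v + t\<^sup>2 * (norm v)\<^sup>2"
      unfolding power2_norm_eq_inner by (simp add: inner_diff_left inner_diff_right inner_commute algebra_simps power2_eq_square)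
    ultimately have "(norm (g - A yt))\<^sup>2 = (norm e)\<^sup>2 - 2 * t * inner e v + t\<^sup>2 * (norm v)\<^sup>2" by simp
    then have i2: "c * (norm e)\<^sup>2 + rx \<le> c * ((norm e)\<^sup>2 - 2 * t * inner e v + t\<^sup>2 * (norm v)\<^sup>2) + (t * ry + (1 - t) * rx)"
      using i1 by simp
    have "t * (c * (t * (norm v)\<^sup>2 - 2 * inner e v) + (ry - rx)) = (c * ((norm e)\<^sup>2 - 2 * t * inner e v + t\<^sup>2 * (norm v)\<^sup>2) + (t * ry + (1 - t) * rx)) - (c * (norm e)\<^sup>2 + rx)"
      by (simp add: algebra_simps power2_eq_square)
    then have "0 \<le> t * (c * (t * (norm v)\<^sup>2 - 2 * inner e v) + (ry - rx))"
      using i2 by linarith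
    then have "0 \<le> c * (t * (norm v)\<^sup>2 - 2 * inner e v) + (ry - rx)"
      using t by (simp add: zero_le_mult_iff)
    then show ?thesis unfolding c_def using al by (simp add: field_simps)
  qed
  have "inner e v / \<alpha> \<le> ry - rx"
    by (rule lim_aux[OF _ key]) (use al in auto)
  then show ?thesis using rx ry unfolding e_def v_def by simp
qed



lemma stab:
  fixes R :: "'a::real_vector \<Rightarrow> ereal" and A :: "'a \<Rightarrow> 'b::real_inner"
  assumes pc: "proper_convex R" and lin: "linear A" and al: "\<alpha> > 0"
    and xa: "xa \<in> tikh R A \<alpha> g1" and za: "za \<in> tikh R A \<alpha> g2"
  shows "norm (A xa - A za) \<le> norm (g1 - g2)"
proof -
  have xd: "xa \<in> edom R" using xa unfolding tikh_def by auto
  have zd: "za \<in> edom R" using za unfolding tikh_def by auto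
  have i1: "inner (g1 - A xa) (A za - A xa) / \<alpha> \<le> real_of_ereal (R za) - real_of_ereal (R xa)"
    by (rule VI[OF pc lin al xa zd])
  have i2: "inner (g2 - A za) (A xa - A za) / \<alpha> \<le> real_of_ereal (R xa) - real_of_ereal (R za)"
    by (rule VI[OF pc lin al za xd])
  define w where "w = A xa - A za"
  have "inner (g1 - A xa) (A za - A xa) / \<alpha> + inner (g2 - A za) (A xa - A za) / \<alpha> \<le> 0"
    using i1 i2 by linarith
  then have "inner (g1 - A xa) (A za - A xa) + inner (g2 - A za) (A xa - A za) \<le> 0"
    using al by (simp add: add_divide_distrib[symmetric] divide_le_0_iff)
  moreover have "inner (g1 - A xa) (A za - A xa) + inner (g2 - A za) (A xa - A za)
      = inner (g2 - g1) w + (norm w)\<^sup>2"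
    unfolding w_def power2_norm_eq_inner by (simp add: inner_diff_left inner_diff_right inner_commute algebra_simps)
  ultimately have "(norm w)\<^sup>2 \<le> inner (g1 - g2) w" by (simp add: inner_diff_left)
  also have "\<dots> \<le> norm (g1 - g2) * norm w" by (rule norm_cauchy_schwarz)
  finally have "norm w * norm w \<le> norm (g1 - g2) * norm w" by (simp add: power2_eq_square)
  then have "norm w \<le> norm (g1 - g2)"
    by (cases "norm w = 0") (auto simp: mult_le_cancel_right)
  then show ?thesis unfolding w_def .
qed

lemma rhob:
  fixes R :: "'a::real_vector \<Rightarrow> ereal" and A :: "'a \<Rightarrow> 'b::real_inner"
  assumes pc: "proper_convex R" and lin: "linear A" and al: "\<alpha> > 0" and be: "\<beta> > 0"
    and xa: "xa \<in> tikh R A \<alpha> (A x)" and zb: "zb \<in> tikh R A \<beta> (A xa)"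
  shows "norm (A xa - A zb) / \<beta> \<le> norm (A x - A xa) / \<alpha>"
proof -
  have xd: "xa \<in> edom R" using xa unfolding tikh_def by auto
  have zd: "zb \<in> edom R" using zb unfolding tikh_def by auto
  have i1: "inner (A x - A xa) (A zb - A xa) / \<alpha> \<le> real_of_ereal (R zb) - real_of_ereal (R xa)"
    by (rule VI[OF pc lin al xa zd])
  have i2: "inner (A xa - A zb) (A xa - A zb) / \<beta> \<le> real_of_ereal (R xa) - real_of_ereal (R zb)"
    by (rule VI[OF pc lin be zb xd])
  define w where "w = A xa - A zb"
  define d where "d = norm (A x - A xa)"
  have e: "inner (A x - A xa) (A zb - A xa) = - inner (A x - A xa) w"
    unfolding w_def by (simp add: inner_diff_right)
  have "(norm w)\<^sup>2 / \<beta> \<le> inner (A x - A xa) w / \<alpha>"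
    using i1 i2 e unfolding w_def power2_norm_eq_inner by simp
  also have "\<dots> \<le> d * norm w / \<alpha>"
    using al norm_cauchy_schwarz[of "A x - A xa" w] unfolding d_def by (simp add: divide_right_mono)
  finally have "norm w * norm w / \<beta> \<le> d * norm w / \<alpha>" by (simp add: power2_eq_square)
  moreover have "norm w * (norm w / \<beta>) = norm w * norm w / \<beta>" by simp
  moreover have "norm w * (d / \<alpha>) = d * norm w / \<alpha>" by simp
  ultimately have "norm w * (norm w / \<beta>) \<le> norm w * (d / \<alpha>)" by linarith
  then have "norm w / \<beta> \<le> d / \<alpha>"
  proof (cases "norm w = 0")
    case True then show ?thesis using al unfolding d_def by simp
  next
    case False
    then have "norm w > 0" by simp
    then show ?thesis using mult_left_le_imp_le[OF \<open>norm w * (norm w / \<beta>) \<le> norm w * (d / \<alpha>)\<close>] by blast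
  qed
  then show ?thesis unfolding w_def d_def .
qed

lemma norm_lsc:
  fixes \<tau> :: "'a topology" and A :: "'a \<Rightarrow> 'b::real_inner"
  assumes top: "topspace \<tau> = UNIV" and cont: "continuous_map \<tau> weak_topology A"
    and q: "q < norm (g - A y)"
  shows "\<exists>U. openin \<tau> U \<and> y \<in> U \<and> (\<forall>y'\<in>U. q < norm (g - A y'))"
proof (cases "q < 0")
  case True
  have "\<forall>y'\<in>topspace \<tau>. q < norm (g - A y')" using True by (auto intro: less_le_trans)
  moreover have "openin \<tau> (topspace \<tau>)" by (rule openin_topspace)
  ultimately show ?thesis using top by (intro exI[of _ "topspace \<tau>"] conjI) simp_all
next
  case False
  define u where "u = A y - g"
  have nu: "norm u > q" using q unfolding u_def by (simp add: norm_minus_commute)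
  define W where "W = {w. inner w u \<in> {inner g u + q * norm u <..}}"
  have "W \<in> {{y. inner y z \<in> U} | z U. open U}" unfolding W_def
    by (intro CollectI exI[of _ u] exI[of _ "{inner g u + q * norm u <..}"] conjI refl open_greaterThan)
  then have "openin weak_topology W" unfolding weak_topology_def by (rule topology_generated_by_Basis)
  then have op: "openin \<tau> {y \<in> topspace \<tau>. A y \<in> W}"
    by (rule openin_continuous_map_preimage[OF cont])
  have "inner (A y) u = inner g u + (norm u)\<^sup>2"
    unfolding u_def power2_norm_eq_inner by (simp add: inner_diff_right inner_diff_left inner_commute)
  moreover have pos: "0 < norm u" using nu False by linarith
  moreover have "q * norm u < (norm u)\<^sup>2"
    using mult_strict_right_mono[OF nu pos] by (simp add: power2_eq_square)
  ultimately have yin: "A y \<in> W" unfolding W_def by simp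
  have "q < norm (g - A y')" if "A y' \<in> W" for y'
  proof -
    have "inner g u + q * norm u < inner (A y') u" using that unfolding W_def by simp
    then have "q * norm u < inner (A y' - g) u" by (simp add: inner_diff_left)
    also have "\<dots> \<le> norm (A y' - g) * norm u" by (rule norm_cauchy_schwarz)
    finally have "q * norm u < norm (A y' - g) * norm u" .
    then have "q < norm (A y' - g)" using nu False
      by (simp add: mult_less_cancel_right)
    then show ?thesis by (simp add: norm_minus_commute)
  qed
  then show ?thesis using op yin top by (intro exI[of _ "{y \<in> topspace \<tau>. A y \<in> W}"]) auto
qed



theorem proposition4p8:
  fixes \<tau> :: "'a::banach topology"
    and R :: "'a \<Rightarrow> ereal"
    and A :: "'a \<Rightarrow> 'b::{real_inner, complete_space}"
    and x xa :: 'a and \<alpha> :: real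
  assumes "locally_convex_hausdorff \<tau>"
    and "proper_convex R"
    and "\<And>c::real. compactin \<tau> {z. R z \<le> ereal c}"
    and "linear A"
    and "continuous_map \<tau> weak_topology A"
    and "\<alpha> > 0"
    and "xa \<in> tikh R A \<alpha> (A x)"
  shows "gamma R A x (norm (A x - A xa) / \<alpha>) \<le> norm (A x - A xa)
       \<and> norm (A x - A xa) \<le> 4 * gamma R A x (norm (A x - A xa) / (4 * \<alpha>))"
proof -
  have H: "Hausdorff_space \<tau>" and top: "topspace \<tau> = UNIV"
    using assms(1) unfolding locally_convex_hausdorff_def by auto
  note pc = assms(2) and comp = assms(3) and lin = assms(4) and cont = assms(5)
    and al = assms(6) and xa = assms(7)
  have Rninf: "R z \<noteq> -\<infinity>" for z using pc unfolding proper_convex_def by auto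
  define d where "d = norm (A x - A xa)"
  have d0: "d \<ge> 0" unfolding d_def by simp
  have tex: "\<exists>z. z \<in> tikh R A \<beta> g" if be: "\<beta> > 0" for \<beta> g
  proof -
    have "\<exists>z\<in>edom R. \<forall>y. ereal (1/(2*\<beta>) * (norm (g - A z))\<^sup>2) + R z \<le> ereal (1/(2*\<beta>) * (norm (g - A y))\<^sup>2) + R y"
    proof (rule exist_min[OF H top pc comp])
      show "0 \<le> 1/(2*\<beta>) * (norm (g - A y))\<^sup>2" for y using be by simp
      show "\<exists>U. openin \<tau> U \<and> y \<in> U \<and> (\<forall>y'\<in>U. q < 1/(2*\<beta>) * (norm (g - A y'))\<^sup>2)"
        if q: "q < 1/(2*\<beta>) * (norm (g - A y))\<^sup>2" for y q
      proof (cases "q < 0")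
        case True
        have "\<forall>y'\<in>topspace \<tau>. q < 1/(2*\<beta>) * (norm (g - A y'))\<^sup>2"
          using True be by (auto intro: less_le_trans)
        moreover have "openin \<tau> (topspace \<tau>)" by (rule openin_topspace)
        ultimately show ?thesis using top by (intro exI[of _ "topspace \<tau>"] conjI) simp_all
      next
        case False
        define s where "s = sqrt (2*\<beta>*q)"
        have qq: "2*\<beta>*q < (norm (g - A y))\<^sup>2" using q be by (simp add: field_simps)
        have s0: "s \<ge> 0" unfolding s_def using False be by simp
        have ss: "s\<^sup>2 = 2*\<beta>*q" unfolding s_def using False be by simp
        have "s < sqrt ((norm (g - A y))\<^sup>2)" unfolding s_def using qq by (rule real_sqrt_less_mono)
        then have "s < norm (g - A y)" by simp
        then obtain U where U: "openin \<tau> U" "y \<in> U" "\<forall>y'\<in>U. s < norm (g - A y')"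
          using norm_lsc[OF top cont] by blast
        have "q < 1/(2*\<beta>) * (norm (g - A y'))\<^sup>2" if "y' \<in> U" for y'
        proof -
          have "s\<^sup>2 < (norm (g - A y'))\<^sup>2" using U(3) that s0 by (intro power_strict_mono) auto
          then have "2*\<beta>*q < (norm (g - A y'))\<^sup>2" using ss by simp
          then show ?thesis using be by (simp add: field_simps)
        qed
        then show ?thesis using U(1,2) by blast
      qed
    qed
    then show ?thesis unfolding tikh_def by auto
  qed
  obtain z0 where z0d: "z0 \<in> edom R" and z0m: "\<And>y. R z0 \<le> R y"
  proof -
    have "\<exists>z\<in>edom R. \<forall>y. ereal ((\<lambda>_. 0) z) + R z \<le> ereal ((\<lambda>_. 0) y) + R y"
    proof (rule exist_min[OF H top pc comp])
      show "0 \<le> (\<lambda>_. 0::real) y" for y by simp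
      show "\<exists>U. openin \<tau> U \<and> y \<in> U \<and> (\<forall>y'\<in>U. q < (\<lambda>_. 0::real) y')"
        if "q < (\<lambda>_. 0::real) y" for y q
      proof -
        have "openin \<tau> (topspace \<tau>)" by (rule openin_topspace)
        then show ?thesis using top that by (intro exI[of _ "topspace \<tau>"] conjI) simp_all
      qed
    qed
    then have "\<exists>z\<in>edom R. \<forall>y. R z \<le> R y" by (simp add: zero_ereal_def[symmetric])
    then show ?thesis using that by blast
  qed
  have z0B: "z0 \<in> Bset R A r" if r0: "r \<ge> 0" for r
  proof -
    have "rho1 R A z0 \<le> ereal r"
      unfolding rho1_def
    proof (rule Sup_least)
      fix e assume "e \<in> {ereal (norm (A z0 - A zb) / \<beta>) | \<beta> zb. \<beta> > 0 \<and> zb \<in> tikh R A \<beta> (A z0)}"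
      then obtain \<beta> zb where e: "e = ereal (norm (A z0 - A zb) / \<beta>)" and be: "\<beta> > 0"
        and zb: "zb \<in> tikh R A \<beta> (A z0)" by blast
      have zbd: "zb \<in> edom R" using zb unfolding tikh_def by auto
      have "ereal (1/(2*\<beta>) * (norm (A z0 - A zb))\<^sup>2) + R zb \<le> ereal (1/(2*\<beta>) * (norm (A z0 - A z0))\<^sup>2) + R z0"
        using zb z0d unfolding tikh_def by blast
      also have "\<dots> = R z0" by (simp add: zero_ereal_def[symmetric])
      also have "\<dots> \<le> R zb" by (rule z0m)
      finally have le: "ereal (1/(2*\<beta>) * (norm (A z0 - A zb))\<^sup>2) + R zb \<le> R zb" .
      obtain rz where rz: "R zb = ereal rz" using zbd Rninf[of zb] unfolding edom_def by (cases "R zb") auto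
      have "1/(2*\<beta>) * (norm (A z0 - A zb))\<^sup>2 \<le> 0" using le rz by simp
      moreover define t where "t = (norm (A z0 - A zb))\<^sup>2"
      ultimately have "t / (2*\<beta>) \<le> 0" by simp
      then have "t \<le> 0" using be by (simp add: divide_le_0_iff)
      then have "norm (A z0 - A zb) = 0" unfolding t_def by simp
      then show "e \<le> ereal r" using e r0 by simp
    qed
    then show ?thesis unfolding Bset_def by simp
  qed
  have xaB: "xa \<in> Bset R A (d / \<alpha>)"
  proof -
    have "rho1 R A xa \<le> ereal (d / \<alpha>)"
      unfolding rho1_def
    proof (rule Sup_least)
      fix e assume "e \<in> {ereal (norm (A xa - A zb) / \<beta>) | \<beta> zb. \<beta> > 0 \<and> zb \<in> tikh R A \<beta> (A xa)}"
      then obtain \<beta> zb where e: "e = ereal (norm (A xa - A zb) / \<beta>)" and be: "\<beta> > 0"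
        and zb: "zb \<in> tikh R A \<beta> (A xa)" by blast
      show "e \<le> ereal (d / \<alpha>)" using rhob[OF pc lin al be xa zb] e unfolding d_def by simp
    qed
    then show ?thesis unfolding Bset_def by simp
  qed
  have bdd: "bdd_below {norm (A x - A z) | z. z \<in> Bset R A r}" for r
    by (rule bdd_belowI[of _ 0]) auto
  have p1: "gamma R A x (d / \<alpha>) \<le> d"
    unfolding gamma_def by (rule cInf_lower[OF _ bdd]) (use xaB in \<open>auto simp: d_def\<close>)
  define r where "r = d / (4 * \<alpha>)"
  have r0: "r \<ge> 0" unfolding r_def using d0 al by simp
  have lb: "d / 4 \<le> norm (A x - A z)" if zB: "z \<in> Bset R A r" for z
  proof -
    obtain za where za: "za \<in> tikh R A \<alpha> (A z)" using tex[OF al] by blast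
    have "ereal (norm (A z - A za) / \<alpha>) \<le> rho1 R A z"
      unfolding rho1_def by (rule Sup_upper) (use al za in auto)
    also have "\<dots> \<le> ereal r" using zB unfolding Bset_def by simp
    finally have "norm (A z - A za) / \<alpha> \<le> d / (4 * \<alpha>)" unfolding r_def by simp
    then have n1: "norm (A z - A za) \<le> d / 4" using al by (simp add: field_simps)
    have n2: "norm (A xa - A za) \<le> norm (A x - A z)" by (rule stab[OF pc lin al xa za])
    have t2: "norm (A z - A xa) \<le> norm (A z - A za) + norm (A za - A xa)"
      by (rule norm_diff_triangle_le) (rule order_refl)+
    have "d \<le> norm (A x - A z) + (norm (A z - A za) + norm (A za - A xa))"
      unfolding d_def by (rule norm_diff_triangle_le[OF order_refl t2])
    moreover have "norm (A za - A xa) = norm (A xa - A za)" by (rule norm_minus_commute)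
    ultimately show ?thesis using n1 n2 d0 by linarith
  qed
  have "d / 4 \<le> gamma R A x r"
    unfolding gamma_def
  proof (rule cInf_greatest)
    show "{norm (A x - A z) |z. z \<in> Bset R A r} \<noteq> {}" using z0B[OF r0] by blast
    show "\<And>e. e \<in> {norm (A x - A z) |z. z \<in> Bset R A r} \<Longrightarrow> d / 4 \<le> e" using lb by blast
  qed
  then have p2: "d \<le> 4 * gamma R A x (d / (4 * \<alpha>))" unfolding r_def by simp
  show ?thesis using p1 p2 unfolding d_def by simp
qed

end
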